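(* Let $(X,\mathcal{B},\mu,T)$ be a measure-preserving transformation of type $\mathbf{II}_\infty$. Let $\alpha$ be a local partition whose core $A$ is a sweep-out set. Then $$\lim_{n\to\infty}\sup\Bigl\{\mu(a):\ a\in\bigvee_{k=0}^{n-1}T^{-k}\alpha,\ 0<\mu(a)<\infty\Bigr\}=0.$$
   Context: Let $(X,\mathcal{B},\mu)$ be a standard $\sigma$-finite measure space and $T$ a measure-preserving transformation. Type $\mathbf{II}_\infty$: $T$ is conservative and there is no $T$-invariant set of finite positive measure. For a countable partition $\alpha$, define $H_\mu(\alpha)=\sum_{a\in\alpha,\,0<\mu(a)<\infty}\mu(a)\log\frac{1}{\mu(a)}$; atoms of infinite measure contribute $0$. A countable partition $\alpha$ is local with core $A$ if $0<\mu(A)<\infty$, $X\setminus A\in\alpha$ and $H_\mu(\alpha)<\infty$. A set $A$ is a sweep-out set if $\bigcup_{n\ge0}T^{-n}A=X$ mod $\mu$. *)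

theory Defs
  imports "HOL-Analysis.Analysis"
begin

definition standard_borel :: "'a measure \<Rightarrow> bool" where
  "standard_borel M \<longleftrightarrow> (\<exists>\<tau>. completely_metrizable_space \<tau> \<and> separable_space \<tau> \<and>
      topspace \<tau> = space M \<and> sets M = sigma_sets (topspace \<tau>) {U. openin \<tau> U})"

definition standard_sigma_finite :: "'a measure \<Rightarrow> bool" where
  "standard_sigma_finite M \<longleftrightarrow> standard_borel M \<and> sigma_finite_measure M"

definition mpt :: "'a measure \<Rightarrow> ('a \<Rightarrow> 'a) \<Rightarrow> bool" where
  "mpt M T \<longleftrightarrow> T \<in> measurable M M \<and>
     (\<forall>B \<in> sets M. emeasure M (T -` B \<inter> space M) = emeasure M B)"

definition wandering :: "'a measure \<Rightarrow> ('a \<Rightarrow> 'a) \<Rightarrow> 'a set \<Rightarrow> bool" where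
  "wandering M T W \<longleftrightarrow> W \<in> sets M \<and>
     disjoint_family (\<lambda>n::nat. (T ^^ n) -` W \<inter> space M)"

definition conservative :: "'a measure \<Rightarrow> ('a \<Rightarrow> 'a) \<Rightarrow> bool" where
  "conservative M T \<longleftrightarrow> (\<forall>W. wandering M T W \<longrightarrow> emeasure M W = 0)"

definition invariant_set :: "'a measure \<Rightarrow> ('a \<Rightarrow> 'a) \<Rightarrow> 'a set \<Rightarrow> bool" where
  "invariant_set M T B \<longleftrightarrow> B \<in> sets M \<and>
     emeasure M (((T -` B \<inter> space M) - B) \<union> (B - (T -` B \<inter> space M))) = 0"

definition type_II_infty :: "'a measure \<Rightarrow> ('a \<Rightarrow> 'a) \<Rightarrow> bool" where
  "type_II_infty M T \<longleftrightarrow> conservative M T \<and>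
     \<not> (\<exists>B. invariant_set M T B \<and> 0 < emeasure M B \<and> emeasure M B < \<infinity>)"

definition countable_partition :: "'a measure \<Rightarrow> 'a set set \<Rightarrow> bool" where
  "countable_partition M \<alpha> \<longleftrightarrow> countable \<alpha> \<and> \<alpha> \<subseteq> sets M \<and> disjoint \<alpha> \<and> \<Union>\<alpha> = space M"

definition fin_atoms :: "'a measure \<Rightarrow> 'a set set \<Rightarrow> 'a set set" where
  "fin_atoms M \<alpha> = {a \<in> \<alpha>. 0 < emeasure M a \<and> emeasure M a < \<infinity>}"

definition ent_term :: "'a measure \<Rightarrow> 'a set \<Rightarrow> real" where
  "ent_term M a = measure M a * ln (1 / measure M a)"

(* H_mu(alpha) < infinity : the defining series converges (absolutely) *)
definition finite_entropy :: "'a measure \<Rightarrow> 'a set set \<Rightarrow> bool" where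
  "finite_entropy M \<alpha> \<longleftrightarrow> (ent_term M) summable_on (fin_atoms M \<alpha>)"

definition entropy :: "'a measure \<Rightarrow> 'a set set \<Rightarrow> real" where
  "entropy M \<alpha> = (\<Sum>\<^sub>\<infinity>a\<in>fin_atoms M \<alpha>. ent_term M a)"

definition local_partition :: "'a measure \<Rightarrow> 'a set set \<Rightarrow> 'a set \<Rightarrow> bool" where
  "local_partition M \<alpha> A \<longleftrightarrow> countable_partition M \<alpha> \<and> A \<in> sets M \<and>
     0 < emeasure M A \<and> emeasure M A < \<infinity> \<and> space M - A \<in> \<alpha> \<and> finite_entropy M \<alpha>"

definition sweep_out :: "'a measure \<Rightarrow> ('a \<Rightarrow> 'a) \<Rightarrow> 'a set \<Rightarrow> bool" where
  "sweep_out M T A \<longleftrightarrow> A \<in> sets M \<and>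
     emeasure M (space M - (\<Union>n. (T ^^ n) -` A \<inter> space M)) = 0"

definition join_part :: "'a measure \<Rightarrow> ('a \<Rightarrow> 'a) \<Rightarrow> 'a set set \<Rightarrow> nat \<Rightarrow> 'a set set" where
  "join_part M T \<alpha> n = {space M \<inter> (\<Inter>k<n. (T ^^ k) -` c k) | c. \<forall>k<n. c k \<in> \<alpha>}"

end

theory Submission
  imports Defs
begin

definition cyl :: "'a measure \<Rightarrow> ('a \<Rightarrow> 'a) \<Rightarrow> (nat \<Rightarrow> 'a set) \<Rightarrow> nat set \<Rightarrow> 'a set" where
  "cyl M T c I = space M \<inter> (\<Inter>k\<in>I. (T ^^ k) -` c k)"

locale L6 =
  fixes M :: "'a measure" and T :: "'a \<Rightarrow> 'a" and \<alpha> :: "'a set set" and A :: "'a set"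
  assumes mpt: "mpt M T"
    and t2: "type_II_infty M T"
    and lp: "local_partition M \<alpha> A"
    and so: "sweep_out M T A"
begin

lemma Tmeas: "T \<in> measurable M M" using mpt unfolding mpt_def by auto

lemma Tn_meas: "(T ^^ k) \<in> measurable M M"
proof (induction k)
  case (Suc k)
  have "T \<circ> (T ^^ k) \<in> measurable M M" using measurable_comp[OF Suc Tmeas] .
  then show ?case by (simp add: comp_def)
qed simp

lemma Tn_space: "x \<in> space M \<Longrightarrow> (T ^^ k) x \<in> space M"
  using measurable_space[OF Tn_meas] by auto

lemma pre_sets: "B \<in> sets M \<Longrightarrow> (T ^^ k) -` B \<inter> space M \<in> sets M"
  using measurable_sets[OF Tn_meas] by auto

lemma mpt1: "B \<in> sets M \<Longrightarrow> emeasure M (T -` B \<inter> space M) = emeasure M B"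
  using mpt unfolding mpt_def by auto

lemma mpt_n: "B \<in> sets M \<Longrightarrow> emeasure M ((T ^^ k) -` B \<inter> space M) = emeasure M B"
proof (induction k arbitrary: B)
  case 0
  then show ?case using sets.sets_into_space by (simp add: Int_absorb2)
next
  case (Suc k)
  have "(T ^^ Suc k) -` B \<inter> space M = (T ^^ k) -` (T -` B \<inter> space M) \<inter> space M"
    using Tn_space by auto
  then show ?case using Suc.IH Suc.prems mpt1 measurable_sets[OF Tmeas] by presburger
qed

lemma countable_alpha: "countable \<alpha>" and alpha_sets: "\<alpha> \<subseteq> sets M"
  and disj_alpha: "disjoint \<alpha>" and Un_alpha: "\<Union>\<alpha> = space M"
  and A_sets: "A \<in> sets M" and A_pos: "0 < emeasure M A" and A_fin: "emeasure M A < \<infinity>"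
  and Ac: "space M - A \<in> \<alpha>"
  using lp unfolding local_partition_def countable_partition_def by auto

lemma A_space: "A \<subseteq> space M" using sets.sets_into_space[OF A_sets] .

lemma atom_unique: "a \<in> \<alpha> \<Longrightarrow> b \<in> \<alpha> \<Longrightarrow> x \<in> a \<Longrightarrow> x \<in> b \<Longrightarrow> a = b"
  using disj_alpha unfolding disjoint_def by blast

lemma atom_sub_A: "c \<in> \<alpha> \<Longrightarrow> c \<noteq> space M - A \<Longrightarrow> c \<subseteq> A"
  using atom_unique[OF _ Ac] Un_alpha by blast

lemma cyl_sets: assumes "\<And>k. k \<in> I \<Longrightarrow> c k \<in> sets M" "countable I"
  shows "cyl M T c I \<in> sets M"
proof (cases "I = {}")
  case True then show ?thesis by (simp add: cyl_def)
next
  case False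
  have "cyl M T c I = (\<Inter>k\<in>I. (T ^^ k) -` c k \<inter> space M)"
    using False unfolding cyl_def by auto
  also have "\<dots> \<in> sets M"
    using assms False by (intro sets.countable_INT) (auto intro: pre_sets)
  finally show ?thesis .
qed

lemma cyl_alpha_sets: "(\<And>k. k \<in> I \<Longrightarrow> c k \<in> \<alpha>) \<Longrightarrow> countable I \<Longrightarrow> cyl M T c I \<in> sets M"
  using cyl_sets alpha_sets by blast

lemma cyl_space: "cyl M T c I \<subseteq> space M" by (auto simp: cyl_def)

lemma cyl_mono: "J \<subseteq> I \<Longrightarrow> cyl M T c I \<subseteq> cyl M T c J" by (auto simp: cyl_def)

lemma cyl_cong: "(\<And>k. k \<in> I \<Longrightarrow> c k = d k) \<Longrightarrow> cyl M T c I = cyl M T d I"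
  by (auto simp: cyl_def)


lemma cons: "conservative M T" using t2 type_II_infty_def by auto

lemma no_inf_cyl:
  assumes c: "\<And>k. c k \<in> \<alpha>" and fin: "emeasure M (cyl M T c UNIV) < \<infinity>"
  shows "emeasure M (cyl M T c UNIV) = 0"
proof (rule ccontr)
  define P where "P = cyl M T c UNIV"
  assume "emeasure M (cyl M T c UNIV) \<noteq> 0"
  hence pos: "0 < emeasure M P" by (simp add: zero_less_iff_neq_zero P_def)
  have Psets: "P \<in> sets M" unfolding P_def using c by (intro cyl_alpha_sets) auto
  have "\<not> wandering M T P" using cons pos unfolding conservative_def by auto
  then have "\<not> disjoint_family (\<lambda>n. (T^^n) -` P \<inter> space M)" using Psets wandering_def by auto
  then obtain i j y where ij: "i < j" and y: "y \<in> (T^^i) -` P \<inter> space M" "y \<in> (T^^j) -` P \<inter> space M"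
    unfolding disjoint_family_on_def by (metis disjoint_iff linorder_neqE_nat)
  define n where "n = j - i"
  define x where "x = (T^^i) y"
  have npos: "0 < n" using ij n_def by simp
  have xP: "x \<in> P" using y x_def by auto
  have "(T^^n) x = (T^^j) y" unfolding x_def n_def using ij
    by (metis funpow_add le_add_diff_inverse2 less_imp_le o_apply)
  hence xnP: "(T^^n) x \<in> P" using y by auto
  have per: "c (n + k) = c k" for k
  proof -
    have "(T^^(n+k)) x = (T^^k) ((T^^n) x)" by (metis add.commute funpow_add o_apply)
    moreover have "(T^^k) ((T^^n) x) \<in> c k" using xnP unfolding P_def cyl_def by blast
    ultimately have "(T^^(n+k)) x \<in> c k" by simp
    moreover have "(T^^(n+k)) x \<in> c (n+k)" using xP unfolding P_def cyl_def by blast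
    ultimately show ?thesis using atom_unique[OF c[of "n+k"] c[of k]] by blast
  qed
  define Q where "Q j = cyl M T (\<lambda>k. c (j + k)) UNIV" for j
  have Qsets: "Q j \<in> sets M" for j unfolding Q_def using c by (intro cyl_alpha_sets) auto
  have QT: "z \<in> Q j \<Longrightarrow> T z \<in> Q (Suc j)" for z j
  proof -
    assume z: "z \<in> Q j"
    have eq: "(T^^k) (T z) = (T^^Suc k) z" for k by (metis funpow_Suc_right o_apply)
    have zs: "z \<in> space M" and zk: "\<And>k. (T^^k) z \<in> c (j + k)"
      using z unfolding Q_def cyl_def by auto
    have "T z \<in> space M" using Tn_space[OF zs, of 1] by simp
    moreover have "(T^^k) (T z) \<in> c (Suc j + k)" for k
      using zk[of "Suc k"] eq[of k] by simp
    ultimately show ?thesis unfolding Q_def cyl_def by blast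
  qed
  have Qn: "Q n = Q 0" unfolding Q_def using per by simp
  have Q0: "Q 0 = P" unfolding Q_def P_def by simp
  have Qle: "emeasure M (Q j) \<le> emeasure M (Q (Suc j))" for j
  proof -
    have "Q j \<subseteq> T -` Q (Suc j) \<inter> space M" using QT Q_def cyl_space by blast
    hence "emeasure M (Q j) \<le> emeasure M (T -` Q (Suc j) \<inter> space M)"
      by (intro emeasure_mono) (use Qsets measurable_sets[OF Tmeas] in auto)
    also have "\<dots> = emeasure M (Q (Suc j))" using mpt1 Qsets by simp
    finally show ?thesis .
  qed
  have Qle2: "emeasure M (Q (n - d)) \<le> emeasure M (Q n)" for d
  proof (induction d)
    case (Suc d)
    show ?case
    proof (cases "d < n")
      case True
      hence "Suc (n - Suc d) = n - d" by simp
      then show ?thesis using Qle[of "n - Suc d"] Suc by simp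
    next
      case False then show ?thesis using Suc by simp
    qed
  qed simp
  have Qbound: "emeasure M (Q j) \<le> emeasure M P" if "j \<le> n" for j
    using Qle2[of "n - j"] that Qn Q0 by simp
  define Y where "Y = (\<Union>j<n. Q j)"
  have Ysets: "Y \<in> sets M" unfolding Y_def using Qsets by auto
  have "emeasure M Y \<le> (\<Sum>j<n. emeasure M (Q j))"
    unfolding Y_def by (rule emeasure_subadditive_finite) (use Qsets in auto)
  also have "\<dots> \<le> (\<Sum>j<n. emeasure M P)" by (intro sum_mono Qbound) simp
  also have "\<dots> = of_nat n * emeasure M P" by simp
  also have "\<dots> < \<infinity>" using fin P_def by (simp add: ennreal_mult_less_top of_nat_less_top)
  finally have Yfin: "emeasure M Y < \<infinity>" .
  have Ypos: "0 < emeasure M Y"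
  proof -
    have "P \<subseteq> Y" unfolding Y_def using npos Q0 by auto
    thus ?thesis using pos emeasure_mono[OF _ Ysets] by (metis order_less_le_trans)
  qed
  have YT: "Y \<subseteq> T -` Y \<inter> space M"
  proof
    fix z assume "z \<in> Y"
    then obtain j where j: "j < n" "z \<in> Q j" unfolding Y_def by auto
    hence "T z \<in> Q (Suc j)" using QT by auto
    moreover have "Q (Suc j) \<subseteq> Y"
    proof (cases "Suc j < n")
      case True then show ?thesis unfolding Y_def by blast
    next
      case False then have "Suc j = n" using j by simp
      then show ?thesis using Qn npos unfolding Y_def by blast
    qed
    moreover have "z \<in> space M" using j Q_def cyl_space by blast
    ultimately show "z \<in> T -` Y \<inter> space M" by auto
  qed
  have TYsets: "T -` Y \<inter> space M \<in> sets M" using measurable_sets[OF Tmeas Ysets] .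
  have "emeasure M ((T -` Y \<inter> space M) - Y) = emeasure M (T -` Y \<inter> space M) - emeasure M Y"
    using Yfin by (intro emeasure_Diff) (use YT TYsets Ysets in auto)
  also have "\<dots> = 0" using mpt1[OF Ysets] Yfin by (simp add: diff_eq_0_iff_ennreal)
  finally have "invariant_set M T Y"
    unfolding invariant_set_def using YT Ysets by (simp add: Diff_eq_empty_iff[THEN iffD2])
  thus False using t2 Ypos Yfin unfolding type_II_infty_def by auto
qed


lemma cyl_sub_c0: "0 \<in> I \<Longrightarrow> cyl M T c I \<subseteq> c 0"
  by (auto simp: cyl_def)

lemma shrink_A:
  assumes \<delta>: "0 < \<delta>"
  shows "\<exists>m. \<forall>c. (\<forall>k<Suc m. c k \<in> \<alpha>) \<longrightarrow> c 0 \<noteq> space M - A \<longrightarrow>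
            emeasure M (cyl M T c {..<Suc m}) < \<delta>"
proof (rule ccontr)
  assume "\<not> ?thesis"
  hence bad: "\<forall>m. \<exists>c. (\<forall>k<Suc m. c k \<in> \<alpha>) \<and> c 0 \<noteq> space M - A \<and>
      \<delta> \<le> emeasure M (cyl M T c {..<Suc m})" by (auto simp: not_less)
  define Bad where "Bad m = {cyl M T c {..<Suc m} | c. (\<forall>k<Suc m. c k \<in> \<alpha>) \<and> c 0 \<noteq> space M - A \<and>
      \<delta> \<le> emeasure M (cyl M T c {..<Suc m})}" for m
  define G where "G m = \<Union>(Bad m)" for m
  have Bad_count: "countable (Bad m)" for m
  proof -
    have "Bad m \<subseteq> (\<lambda>c. cyl M T c {..<Suc m}) ` (PiE {..<Suc m} (\<lambda>_. \<alpha>))"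
    proof
      fix a assume "a \<in> Bad m"
      then obtain c where c: "a = cyl M T c {..<Suc m}" "\<forall>k<Suc m. c k \<in> \<alpha>" unfolding Bad_def by auto
      have "restrict c {..<Suc m} \<in> PiE {..<Suc m} (\<lambda>_. \<alpha>)" using c by auto
      moreover have "a = cyl M T (restrict c {..<Suc m}) {..<Suc m}" unfolding c(1) by (rule cyl_cong) simp
      ultimately show "a \<in> (\<lambda>c. cyl M T c {..<Suc m}) ` (PiE {..<Suc m} (\<lambda>_. \<alpha>))" by blast
    qed
    moreover have "countable ((\<lambda>c. cyl M T c {..<Suc m}) ` (PiE {..<Suc m} (\<lambda>_. \<alpha>)))"
      by (intro countable_image countable_PiE countable_alpha) simp
    ultimately show ?thesis by (rule countable_subset)
  qed
  have Bad_sets: "Bad m \<subseteq> sets M" for m unfolding Bad_def using cyl_alpha_sets by auto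
  have Gsets: "G m \<in> sets M" for m unfolding G_def using Bad_count Bad_sets by (intro sets.countable_Union) auto
  have GA: "G m \<subseteq> A" for m
  proof
    fix x assume "x \<in> G m"
    then obtain c where "x \<in> cyl M T c {..<Suc m}" "c 0 \<in> \<alpha>" "c 0 \<noteq> space M - A"
      unfolding G_def Bad_def by auto
    thus "x \<in> A" using cyl_sub_c0[of "{..<Suc m}" c] atom_sub_A by auto
  qed
  have Gdec: "decseq G"
  proof (rule decseq_SucI)
    fix m show "G (Suc m) \<subseteq> G m"
    proof
      fix x assume "x \<in> G (Suc m)"
      then obtain c where c: "x \<in> cyl M T c {..<Suc (Suc m)}" "\<forall>k<Suc (Suc m). c k \<in> \<alpha>"
        "c 0 \<noteq> space M - A" "\<delta> \<le> emeasure M (cyl M T c {..<Suc (Suc m)})"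
        unfolding G_def Bad_def by auto
      have sub: "cyl M T c {..<Suc (Suc m)} \<subseteq> cyl M T c {..<Suc m}" by (rule cyl_mono) auto
      have "emeasure M (cyl M T c {..<Suc (Suc m)}) \<le> emeasure M (cyl M T c {..<Suc m})"
        using c(2) by (intro emeasure_mono[OF sub] cyl_alpha_sets) auto
      hence "\<delta> \<le> emeasure M (cyl M T c {..<Suc m})" using c(4) by (rule order_trans[rotated])
      moreover have "\<forall>k<Suc m. c k \<in> \<alpha>" using c(2) by simp
      ultimately have "cyl M T c {..<Suc m} \<in> Bad m" using c(3) unfolding Bad_def by blast
      thus "x \<in> G m" using c(1) sub unfolding G_def by blast
    qed
  qed
  have Gmeas: "\<delta> \<le> emeasure M (G m)" for m
  proof -
    obtain c where c: "\<forall>k<Suc m. c k \<in> \<alpha>" "c 0 \<noteq> space M - A"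
        "\<delta> \<le> emeasure M (cyl M T c {..<Suc m})" using bad by blast
    hence "cyl M T c {..<Suc m} \<in> Bad m" unfolding Bad_def by blast
    hence "cyl M T c {..<Suc m} \<subseteq> G m" unfolding G_def by blast
    thus ?thesis using c(3) emeasure_mono[OF _ Gsets] order_trans by blast
  qed
  have Gfin: "emeasure M (G m) \<noteq> \<infinity>" for m
  proof -
    have "emeasure M (G m) < \<infinity>" using le_less_trans[OF emeasure_mono[OF GA A_sets] A_fin] .
    thus ?thesis by simp
  qed
  have "(INF m. emeasure M (G m)) = emeasure M (\<Inter>m. G m)"
    using Gsets Gdec Gfin by (intro INF_emeasure_decseq) auto
  hence "\<delta> \<le> emeasure M (\<Inter>m. G m)" using Gmeas by (metis le_INF_iff)
  hence "(\<Inter>m. G m) \<noteq> {}" using \<delta> by auto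
  then obtain x where x: "\<And>m. x \<in> G m" by blast
  have xs: "x \<in> space M" using GA A_space x[of 0] by auto
  define c where "c k = (SOME a. a \<in> \<alpha> \<and> (T^^k) x \<in> a)" for k
  have c: "c k \<in> \<alpha> \<and> (T^^k) x \<in> c k" for k
  proof -
    have "\<exists>a. a \<in> \<alpha> \<and> (T^^k) x \<in> a" using Un_alpha Tn_space[OF xs, of k] by blast
    thus ?thesis unfolding c_def by (rule someI_ex)
  qed
  have key: "\<delta> \<le> emeasure M (cyl M T c {..<Suc m}) \<and> c 0 \<noteq> space M - A" for m
  proof -
    obtain c' where c': "x \<in> cyl M T c' {..<Suc m}" "\<forall>k<Suc m. c' k \<in> \<alpha>" "c' 0 \<noteq> space M - A"
       "\<delta> \<le> emeasure M (cyl M T c' {..<Suc m})" using x[of m] unfolding G_def Bad_def by auto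
    have eq: "c' k = c k" if "k \<in> {..<Suc m}" for k
    proof -
      have "(T^^k) x \<in> c' k" using c'(1) that unfolding cyl_def by blast
      thus ?thesis using atom_unique c c'(2) that by blast
    qed
    hence "cyl M T c' {..<Suc m} = cyl M T c {..<Suc m}" by (rule cyl_cong)
    thus ?thesis using c' eq[of 0] by auto
  qed
  define P where "P = cyl M T c UNIV"
  have Peq: "P = (\<Inter>m. cyl M T c {..<Suc m})"
  proof
    show "P \<subseteq> (\<Inter>m. cyl M T c {..<Suc m})" unfolding P_def using cyl_mono by blast
    show "(\<Inter>m. cyl M T c {..<Suc m}) \<subseteq> P"
    proof
      fix y assume y: "y \<in> (\<Inter>m. cyl M T c {..<Suc m})"
      hence "y \<in> space M" using cyl_space by blast
      moreover have "(T^^k) y \<in> c k" for k using y[simplified, rule_format, of k] unfolding cyl_def by auto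
      ultimately show "y \<in> P" unfolding P_def cyl_def by blast
    qed
  qed
  have csets: "cyl M T c {..<Suc m} \<in> sets M" for m using c by (intro cyl_alpha_sets) auto
  have cA: "cyl M T c {..<Suc m} \<subseteq> A" for m using cyl_sub_c0[of "{..<Suc m}" c] atom_sub_A c key[of 0] by auto
  have cfin: "emeasure M (cyl M T c {..<Suc m}) \<noteq> \<infinity>" for m
  proof -
    have "emeasure M (cyl M T c {..<Suc m}) < \<infinity>" using le_less_trans[OF emeasure_mono[OF cA A_sets] A_fin] .
    thus ?thesis by simp
  qed
  have "(INF m. emeasure M (cyl M T c {..<Suc m})) = emeasure M P"
  proof -
    have "decseq (\<lambda>m. cyl M T c {..<Suc m})"
      unfolding decseq_def by (intro allI impI cyl_mono) auto
    then show ?thesis unfolding Peq using csets cfin by (intro INF_emeasure_decseq) auto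
  qed
  hence Pge: "\<delta> \<le> emeasure M P" using key by (metis le_INF_iff)
  have "P \<subseteq> A" unfolding Peq using cA by blast
  hence "emeasure M P < \<infinity>" using le_less_trans[OF emeasure_mono[OF _ A_sets] A_fin] by blast
  hence "emeasure M P = 0" unfolding P_def using c by (intro no_inf_cyl) auto
  thus False using Pge \<delta> by simp
qed


definition Dset :: "nat \<Rightarrow> 'a set" where "Dset k = cyl M T (\<lambda>_. space M - A) {..<k}"
definition Eset :: "nat \<Rightarrow> 'a set" where "Eset k = Dset k \<inter> (T^^k) -` A"
definition Vset :: "nat \<Rightarrow> 'a set" where "Vset k = A \<inter> T -` Dset k"

lemma memD: "x \<in> Dset k \<longleftrightarrow> x \<in> space M \<and> (\<forall>j<k. (T^^j) x \<notin> A)"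
  unfolding Dset_def cyl_def using Tn_space by auto

lemma Dsets: "Dset k \<in> sets M" unfolding Dset_def using Ac by (intro cyl_alpha_sets) auto

lemma Esets: "Eset k \<in> sets M"
proof -
  have "Eset k = Dset k \<inter> ((T^^k) -` A \<inter> space M)" unfolding Eset_def using memD by auto
  thus ?thesis using Dsets pre_sets[OF A_sets] by auto
qed

lemma TD: "x \<in> space M \<Longrightarrow> T x \<in> Dset k \<longleftrightarrow> (\<forall>j<k. (T^^Suc j) x \<notin> A)"
proof -
  assume x: "x \<in> space M"
  have "T x \<in> space M" using Tn_space[OF x, of 1] by simp
  moreover have "(T^^j) (T x) = (T^^Suc j) x" for j by (metis funpow_Suc_right o_apply)
  ultimately show ?thesis using memD by auto
qed

lemma TsetsM: "B \<in> sets M \<Longrightarrow> T -` B \<inter> space M \<in> sets M" using measurable_sets[OF Tmeas] by auto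

lemma Vsets: "Vset k \<in> sets M"
proof -
  have "Vset k = A \<inter> (T -` Dset k \<inter> space M)" unfolding Vset_def using A_space by auto
  thus ?thesis using A_sets TsetsM[OF Dsets] by auto
qed

lemma all_less_Suc': "(\<forall>j<Suc k. P j) \<longleftrightarrow> P 0 \<and> (\<forall>j<k. P (Suc j))"
  by (auto simp: less_Suc_eq_0_disj)

lemma D_split: "Dset k = Eset k \<union> Dset (Suc k)" "Eset k \<inter> Dset (Suc k) = {}"
  by (auto simp: Eset_def memD less_Suc_eq)

lemma TE: "T -` Eset k \<inter> space M = Eset (Suc k) \<union> (A \<inter> T -` Eset k)"
          "Eset (Suc k) \<inter> (A \<inter> T -` Eset k) = {}"
proof -
  have eqk: "(T^^k) (T x) = (T^^Suc k) x" for x by (metis funpow_Suc_right o_apply)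
  have 1: "x \<in> Eset (Suc k) \<longleftrightarrow> x \<in> space M \<and> x \<notin> A \<and> T x \<in> Eset k" for x
  proof -
    have "x \<in> Eset (Suc k) \<longleftrightarrow> x \<in> space M \<and> (\<forall>j<Suc k. (T^^j) x \<notin> A) \<and> (T^^Suc k) x \<in> A"
      by (simp add: Eset_def memD)
    also have "\<dots> \<longleftrightarrow> x \<in> space M \<and> x \<notin> A \<and> (\<forall>j<k. (T^^Suc j) x \<notin> A) \<and> (T^^Suc k) x \<in> A"
      unfolding all_less_Suc'[where P="\<lambda>j. (T^^j) x \<notin> A"] by simp
    also have "\<dots> \<longleftrightarrow> x \<in> space M \<and> x \<notin> A \<and> T x \<in> Eset k"
      unfolding Eset_def using TD eqk by auto
    finally show ?thesis .
  qed
  show "T -` Eset k \<inter> space M = Eset (Suc k) \<union> (A \<inter> T -` Eset k)"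
    using 1 A_space by auto
  show "Eset (Suc k) \<inter> (A \<inter> T -` Eset k) = {}" using 1 by auto
qed

lemma V_split: "Vset k = (A \<inter> T -` Eset k) \<union> Vset (Suc k)" "(A \<inter> T -` Eset k) \<inter> Vset (Suc k) = {}"
  unfolding Vset_def using D_split[of k] by auto

lemma AE_sets: "A \<inter> T -` Eset k \<in> sets M"
proof -
  have "A \<inter> T -` Eset k = A \<inter> (T -` Eset k \<inter> space M)" using A_space by auto
  thus ?thesis using A_sets TsetsM[OF Esets] by auto
qed

lemma EV: "emeasure M (Eset k) = emeasure M (Vset k)"
proof (induction k)
  case 0
  have "Eset 0 = A" using A_space by (auto simp: Eset_def memD)
  moreover have "Vset 0 = A" using A_space Tn_space[of _ 1] by (auto simp: Vset_def memD)
  ultimately show ?case by simp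
next
  case (Suc k)
  define r where "r = emeasure M (A \<inter> T -` Eset k)"
  have rfin: "r \<noteq> \<infinity>"
  proof -
    have "r \<le> emeasure M A" unfolding r_def by (rule emeasure_mono) (use A_sets in auto)
    thus ?thesis using A_fin by (auto simp: top_unique)
  qed
  have "emeasure M (Eset k) = emeasure M (T -` Eset k \<inter> space M)" using mpt1[OF Esets] by simp
  also have "\<dots> = r + emeasure M (Eset (Suc k))" unfolding TE(1) r_def
    using plus_emeasure[OF Esets AE_sets TE(2)] by (simp add: add.commute Un_commute)
  finally have 1: "emeasure M (Eset k) = r + emeasure M (Eset (Suc k))" .
  have 2: "emeasure M (Vset k) = r + emeasure M (Vset (Suc k))"
    unfolding r_def using plus_emeasure[OF AE_sets Vsets V_split(2)] V_split(1)[of k] by simp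
  have "r + emeasure M (Eset (Suc k)) = r + emeasure M (Vset (Suc k))"
    by (simp only: 1[symmetric] 2[symmetric] Suc.IH)
  hence "r = \<infinity> \<or> emeasure M (Eset (Suc k)) = emeasure M (Vset (Suc k))"
    by (rule ennreal_add_left_cancel[THEN iffD1])
  thus ?case using rfin by blast
qed

lemma V_dec: "decseq Vset"
  by (auto simp: decseq_def Vset_def memD)

lemma W_wand: "wandering M T (\<Inter>k. Vset k)"
proof -
  define W where "W = (\<Inter>k. Vset k)"
  have Wsets: "W \<in> sets M" unfolding W_def using Vsets by auto
  have WA: "W \<subseteq> A" unfolding W_def Vset_def by auto
  have no: "(T^^i) -` W \<inter> ((T^^j) -` W \<inter> space M) = {}" if ij: "i < j" for i j
  proof (rule ccontr)
    assume "\<not> ?thesis"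
    then obtain x where x: "(T^^i) x \<in> W" "(T^^j) x \<in> W" "x \<in> space M" by auto
    define d where "d = j - i"
    define y where "y = (T^^i) x"
    have ys: "y \<in> space M" using Tn_space[OF x(3)] y_def by simp
    have d: "0 < d" using ij d_def by simp
    have "y \<in> Vset d" using x(1) y_def W_def by auto
    hence "T y \<in> Dset d" unfolding Vset_def by auto
    hence "\<forall>j<d. (T^^Suc j) y \<notin> A" using TD[OF ys] by blast
    moreover have "d - 1 < d" using d by simp
    ultimately have "(T^^Suc (d - 1)) y \<notin> A" by blast
    moreover have "(T^^Suc (d - 1)) y = (T^^j) x" unfolding y_def d_def using ij
      by (metis Suc_diff_1 d d_def funpow_add le_add_diff_inverse2 less_imp_le o_apply)
    ultimately show False using x(2) WA by auto
  qed
  have "disjoint_family (\<lambda>n. (T^^n) -` W \<inter> space M)"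
    unfolding disjoint_family_on_def
  proof (intro ballI impI)
    fix m n :: nat assume "m \<noteq> n"
    then consider "m < n" | "n < m" by linarith
    then show "(T^^m) -` W \<inter> space M \<inter> ((T^^n) -` W \<inter> space M) = {}"
      by cases (use no in blast)+
  qed
  thus ?thesis unfolding wandering_def W_def[symmetric] using Wsets by simp
qed

lemma E_lim: "(\<lambda>k. emeasure M (Eset k)) \<longlonglongrightarrow> 0"
proof -
  have fin: "emeasure M (Vset k) \<noteq> \<infinity>" for k
  proof -
    have "emeasure M (Vset k) \<le> emeasure M A" by (rule emeasure_mono) (use A_sets in \<open>auto simp: Vset_def\<close>)
    thus ?thesis using A_fin by (auto simp: top_unique)
  qed
  have "(\<lambda>k. emeasure M (Vset k)) \<longlonglongrightarrow> emeasure M (\<Inter>k. Vset k)"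
    using Vsets V_dec fin by (intro Lim_emeasure_decseq) auto
  moreover have "emeasure M (\<Inter>k. Vset k) = 0" using W_wand cons unfolding conservative_def by auto
  ultimately show ?thesis using EV by simp
qed

lemma D_lim:
  assumes N: "emeasure M (Dset N) < \<infinity>"
  shows "(\<lambda>k. emeasure M (Dset k)) \<longlonglongrightarrow> 0"
proof -
  have dec: "decseq (\<lambda>k. Dset (k + N))" by (auto simp: decseq_def memD)
  have fin: "emeasure M (Dset (k + N)) \<noteq> \<infinity>" for k
  proof -
    have "Dset (k + N) \<subseteq> Dset N" by (auto simp: memD)
    hence "emeasure M (Dset (k + N)) \<le> emeasure M (Dset N)" using Dsets emeasure_mono by blast
    thus ?thesis using N by (auto simp: top_unique)
  qed
  have "(\<lambda>k. emeasure M (Dset (k + N))) \<longlonglongrightarrow> emeasure M (\<Inter>k. Dset (k + N))"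
    using Dsets dec fin by (intro Lim_emeasure_decseq) auto
  moreover have "emeasure M (\<Inter>k. Dset (k + N)) = 0"
  proof -
    define S where "S = space M - (\<Union>n. (T ^^ n) -` A \<inter> space M)"
    have S0: "emeasure M S = 0" using so unfolding sweep_out_def S_def by auto
    have Ssets: "S \<in> sets M" unfolding S_def using pre_sets[OF A_sets]
      by (intro sets.Diff sets.top) (auto intro!: sets.countable_UN simp del: UN_simps)
    have "(\<Inter>k. Dset (k + N)) \<subseteq> S"
    proof
      fix x assume "x \<in> (\<Inter>k. Dset (k + N))"
      hence "\<forall>k. x \<in> Dset (k + N)" by blast
      hence "x \<in> space M \<and> (\<forall>j. (T^^j) x \<notin> A)" unfolding memD
        by (metis less_add_Suc1 add_Suc)
      thus "x \<in> S" unfolding S_def by auto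
    qed
    thus ?thesis using emeasure_mono[OF _ Ssets] S0 by (metis le_zero_eq)
  qed
  ultimately have "(\<lambda>k. emeasure M (Dset (k + N))) \<longlonglongrightarrow> 0" by simp
  thus ?thesis by (rule LIMSEQ_offset)
qed


lemma atoms_small:
  assumes \<delta>: "0 < \<delta>"
  shows "\<exists>N. \<forall>n\<ge>N. \<forall>c. (\<forall>k<n. c k \<in> \<alpha>) \<longrightarrow> emeasure M (cyl M T c {..<n}) < \<infinity> \<longrightarrow>
            emeasure M (cyl M T c {..<n}) < \<delta>"
proof -
  obtain m0 where m0: "\<forall>c. (\<forall>k<Suc m0. c k \<in> \<alpha>) \<longrightarrow> c 0 \<noteq> space M - A \<longrightarrow>
            emeasure M (cyl M T c {..<Suc m0}) < \<delta>" using shrink_A[OF \<delta>] by blast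
  have "eventually (\<lambda>k. emeasure M (Eset k) < \<delta>) sequentially"
    using order_tendstoD(2)[OF E_lim \<delta>] .
  then obtain K where K: "\<And>k. k \<ge> K \<Longrightarrow> emeasure M (Eset k) < \<delta>"
    unfolding eventually_sequentially by blast
  obtain N1 where N1: "\<And>n. n \<ge> N1 \<Longrightarrow> emeasure M (Dset n) < \<infinity> \<Longrightarrow> emeasure M (Dset n) < \<delta>"
  proof (cases "\<exists>N. emeasure M (Dset N) < \<infinity>")
    case True
    then obtain N where "emeasure M (Dset N) < \<infinity>" by blast
    hence "eventually (\<lambda>k. emeasure M (Dset k) < \<delta>) sequentially"
      using order_tendstoD(2)[OF D_lim \<delta>] by blast
    then obtain N1 where "\<And>k. k \<ge> N1 \<Longrightarrow> emeasure M (Dset k) < \<delta>"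
      unfolding eventually_sequentially by blast
    thus ?thesis using that by blast
  next
    case False
    thus ?thesis using that[of 0] by blast
  qed
  show ?thesis
  proof (intro exI[of _ "K + Suc m0 + N1"] allI impI)
    fix n c
    assume n: "K + Suc m0 + N1 \<le> n" and c: "\<forall>k<n. c k \<in> \<alpha>"
      and fin: "emeasure M (cyl M T c {..<n}) < \<infinity>"
    have asets: "cyl M T c {..<n} \<in> sets M" using c by (intro cyl_alpha_sets) auto
    show "emeasure M (cyl M T c {..<n}) < \<delta>"
    proof (cases "\<forall>k<n. c k = space M - A")
      case True
      hence "cyl M T c {..<n} = Dset n" unfolding Dset_def by (intro cyl_cong) auto
      thus ?thesis using N1[of n] n fin by simp
    next
      case False
      then obtain k1 where k1: "k1 < n" "c k1 \<noteq> space M - A" by blast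
      define k0 where "k0 = (LEAST k. k < n \<and> c k \<noteq> space M - A)"
      have k0: "k0 < n" "c k0 \<noteq> space M - A"
        using LeastI[of "\<lambda>k. k < n \<and> c k \<noteq> space M - A", OF conjI[OF k1]] unfolding k0_def by auto
      have before: "c j = space M - A" if "j < k0" for j
        using not_less_Least[of j "\<lambda>k. k < n \<and> c k \<noteq> space M - A"] that k0 unfolding k0_def by auto
      have ck0A: "c k0 \<subseteq> A" using atom_sub_A c k0 by auto
      show ?thesis
      proof (cases "K \<le> k0")
        case True
        have "cyl M T c {..<n} \<subseteq> Eset k0"
        proof
          fix x assume x: "x \<in> cyl M T c {..<n}"
          hence xs: "x \<in> space M" and xk: "\<And>k. k < n \<Longrightarrow> (T^^k) x \<in> c k" unfolding cyl_def by auto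
          have "\<forall>j<k0. (T^^j) x \<notin> A" using xk before k0(1) by fastforce
          moreover have "(T^^k0) x \<in> A" using xk[OF k0(1)] ck0A by auto
          ultimately show "x \<in> Eset k0" unfolding Eset_def using memD xs by auto
        qed
        hence "emeasure M (cyl M T c {..<n}) \<le> emeasure M (Eset k0)" using Esets emeasure_mono by blast
        thus ?thesis using K[OF True] by (rule le_less_trans)
      next
        case False
        define c' where "c' j = c (k0 + j)" for j
        have c'a: "\<forall>k<Suc m0. c' k \<in> \<alpha>" using c n False unfolding c'_def by auto
        have c'0: "c' 0 \<noteq> space M - A" using k0 c'_def by simp
        have csets: "cyl M T c' {..<Suc m0} \<in> sets M" using c'a by (intro cyl_alpha_sets) auto
        have "cyl M T c {..<n} \<subseteq> (T^^k0) -` cyl M T c' {..<Suc m0} \<inter> space M"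
        proof
          fix x assume x: "x \<in> cyl M T c {..<n}"
          hence xs: "x \<in> space M" and xk: "\<And>k. k < n \<Longrightarrow> (T^^k) x \<in> c k" unfolding cyl_def by auto
          have "(T^^j) ((T^^k0) x) \<in> c' j" if "j < Suc m0" for j
          proof -
            have "(T^^j) ((T^^k0) x) = (T^^(j + k0)) x" by (simp add: funpow_add)
            moreover have "j + k0 < n" using that n False by simp
            ultimately show ?thesis using xk unfolding c'_def by (simp add: add.commute)
          qed
          thus "x \<in> (T^^k0) -` cyl M T c' {..<Suc m0} \<inter> space M"
            using xs Tn_space[OF xs, of k0] unfolding cyl_def by auto
        qed
        hence "emeasure M (cyl M T c {..<n}) \<le> emeasure M ((T^^k0) -` cyl M T c' {..<Suc m0} \<inter> space M)"
          using pre_sets[OF csets] emeasure_mono by blast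
        also have "\<dots> = emeasure M (cyl M T c' {..<Suc m0})" using mpt_n[OF csets] .
        also have "\<dots> < \<delta>" using m0 c'a c'0 by blast
        finally show ?thesis .
      qed
    qed
  qed
qed

lemma main:
  "(\<lambda>n. Sup {emeasure M a | a. a \<in> join_part M T \<alpha> n \<and> 0 < emeasure M a \<and> emeasure M a < \<infinity>})
           \<longlonglongrightarrow> 0"
proof (rule order_tendstoI)
  fix y :: ennreal assume "y < 0" thus "eventually (\<lambda>n. y < Sup {emeasure M a | a. a \<in> join_part M T \<alpha> n \<and> 0 < emeasure M a \<and> emeasure M a < \<infinity>}) sequentially"
    by simp
next
  fix y :: ennreal assume y: "0 < y"
  obtain \<delta> where \<delta>: "0 < \<delta>" "\<delta> < y" using dense[OF y] by blast
  obtain N where N: "\<forall>n\<ge>N. \<forall>c. (\<forall>k<n. c k \<in> \<alpha>) \<longrightarrow> emeasure M (cyl M T c {..<n}) < \<infinity> \<longrightarrow>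
            emeasure M (cyl M T c {..<n}) < \<delta>" using atoms_small[OF \<delta>(1)] by blast
  show "eventually (\<lambda>n. Sup {emeasure M a | a. a \<in> join_part M T \<alpha> n \<and> 0 < emeasure M a \<and> emeasure M a < \<infinity>} < y) sequentially"
    unfolding eventually_sequentially
  proof (intro exI[of _ N] allI impI)
    fix n assume n: "N \<le> n"
    have "Sup {emeasure M a | a. a \<in> join_part M T \<alpha> n \<and> 0 < emeasure M a \<and> emeasure M a < \<infinity>} \<le> \<delta>"
    proof (rule Sup_least)
      fix z assume "z \<in> {emeasure M a | a. a \<in> join_part M T \<alpha> n \<and> 0 < emeasure M a \<and> emeasure M a < \<infinity>}"
      then obtain c where z: "z = emeasure M (cyl M T c {..<n})" "\<forall>k<n. c k \<in> \<alpha>"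
        "emeasure M (cyl M T c {..<n}) < \<infinity>"
        unfolding join_part_def cyl_def by auto
      thus "z \<le> \<delta>" using N n by (auto intro: less_imp_le)
    qed
    thus "Sup {emeasure M a | a. a \<in> join_part M T \<alpha> n \<and> 0 < emeasure M a \<and> emeasure M a < \<infinity>} < y"
      using \<delta>(2) by (rule le_less_trans)
  qed
qed

end

theorem lemma6p1:
  fixes M :: "'a measure" and T :: "'a \<Rightarrow> 'a" and \<alpha> :: "'a set set" and A :: "'a set"
  assumes "standard_sigma_finite M"
    and "mpt M T"
    and "type_II_infty M T"
    and "local_partition M \<alpha> A"
    and "sweep_out M T A"
  shows "(\<lambda>n. Sup {emeasure M a | a. a \<in> join_part M T \<alpha> n \<and> 0 < emeasure M a \<and> emeasure M a < \<infinity>})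
           \<longlonglongrightarrow> 0"
proof -
  interpret L6 M T \<alpha> A using assms(2-5) by unfold_locales
  show ?thesis by (rule main)
qed

end
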